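(* A set $\mathbf D$ of tilings is a closed Condorcet super-domain if and only if it is a median super-domain, i.e. for any $T_1,T_2,T_3\in\mathbf D$ the set $(T_1\cap T_2)\cup(T_2\cap T_3)\cup(T_1\cap T_3)$ belongs to $\mathbf D$.
   Context: Fix an integer $n\ge 3$ and write $[n]=\{1,\dots,n\}$. Let $\Lambda$ be the set of 3-element subsets of $[n]$; a triple $\{i,j,k\}$ with $i<j<k$ is written $ijk$. For a 4-element subset $F=\{i<j<k<l\}$ of $[n]$, the stick of $F$ is the sequence $(ijk,\ ijl,\ ikl,\ jkl)$. A tiling (the inversion set of a rhombus tiling of the zonogon $Z(n;2)$) is a subset $T\subseteq\Lambda$ such that for every 4-element $F\subseteq[n]$, $T\cap\mathrm{stick}(F)$ is an initial segment or a final segment of the stick (empty set and whole stick allowed). For a finite set $V$ of odd cardinality and tilings $(T_v)_{v\in V}$, $sm((T_v)_{v\in V})$ is the set of triples lying in $T_v$ for more than $|V|/2$ indices $v$. A set $\mathbf D$ of tilings is a Condorcet super-domain if for every finite $V$ of odd cardinality and every family $(T_v)_{v\in V}$ with all $T_v\in\mathbf D$, $sm((T_v)_{v\in V})$ is a tiling; it is closed if moreover $sm((T_v)_{v\in V})\in\mathbf D$ for all such $V$ and families. *)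

theory Defs
  imports Main
begin

definition Lambda :: "nat \<Rightarrow> nat set set" where
  "Lambda n = {A. A \<subseteq> {1..n} \<and> card A = 3}"

definition stick :: "nat \<Rightarrow> nat \<Rightarrow> nat \<Rightarrow> nat \<Rightarrow> nat set list" where
  "stick i j k l = [{i,j,k}, {i,j,l}, {i,k,l}, {j,k,l}]"

definition is_tiling :: "nat \<Rightarrow> nat set set \<Rightarrow> bool" where
  "is_tiling n T \<longleftrightarrow> T \<subseteq> Lambda n \<and>
     (\<forall>i j k l. 1 \<le> i \<and> i < j \<and> j < k \<and> k < l \<and> l \<le> n \<longrightarrow>
        (\<exists>m\<le>4. T \<inter> set (stick i j k l) = set (take m (stick i j k l))
               \<or> T \<inter> set (stick i j k l) = set (drop m (stick i j k l))))"

definition sm :: "nat \<Rightarrow> 'v set \<Rightarrow> ('v \<Rightarrow> nat set set) \<Rightarrow> nat set set" where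
  "sm n V T = {t \<in> Lambda n. 2 * card {v \<in> V. t \<in> T v} > card V}"

definition condorcet_super_domain :: "nat \<Rightarrow> nat set set set \<Rightarrow> bool" where
  "condorcet_super_domain n D \<longleftrightarrow> (\<forall>T\<in>D. is_tiling n T) \<and>
     (\<forall>(V::nat set) T. finite V \<and> odd (card V) \<and> (\<forall>v\<in>V. T v \<in> D) \<longrightarrow>
        is_tiling n (sm n V T))"

definition closed_condorcet_super_domain :: "nat \<Rightarrow> nat set set set \<Rightarrow> bool" where
  "closed_condorcet_super_domain n D \<longleftrightarrow> condorcet_super_domain n D \<and>
     (\<forall>(V::nat set) T. finite V \<and> odd (card V) \<and> (\<forall>v\<in>V. T v \<in> D) \<longrightarrow>
        sm n V T \<in> D)"

definition median_super_domain :: "nat \<Rightarrow> nat set set set \<Rightarrow> bool" where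
  "median_super_domain n D \<longleftrightarrow> (\<forall>T\<in>D. is_tiling n T) \<and>
     (\<forall>T1\<in>D. \<forall>T2\<in>D. \<forall>T3\<in>D. (T1 \<inter> T2) \<union> (T2 \<inter> T3) \<union> (T1 \<inter> T3) \<in> D)"

end

theory Submission
  imports Defs
begin

lemma agree_big:
  fixes V :: "nat set" and T :: "nat \<Rightarrow> nat set set"
  assumes fin: "finite V" and odd: "odd (card V)" and sub: "\<forall>v\<in>V. T v \<subseteq> Lambda n"
  shows "2 * card {v\<in>V. (a \<in> T v) = (a \<in> sm n V T)} > card V"
proof (cases "a \<in> sm n V T")
  case True
  then have "2 * card {v\<in>V. a \<in> T v} > card V" by (simp add: sm_def)
  moreover have "{v\<in>V. (a \<in> T v) = (a \<in> sm n V T)} = {v\<in>V. a \<in> T v}" using True by auto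
  ultimately show ?thesis by simp
next
  case False
  have eq: "{v\<in>V. (a \<in> T v) = (a \<in> sm n V T)} = V - {v\<in>V. a \<in> T v}" using False by auto
  have c: "card (V - {v\<in>V. a \<in> T v}) = card V - card {v\<in>V. a \<in> T v}"
    using fin by (intro card_Diff_subset) auto
  have le: "card {v\<in>V. a \<in> T v} \<le> card V" using fin by (intro card_mono) auto
  show ?thesis
  proof (cases "a \<in> Lambda n")
    case True
    then have "2 * card {v\<in>V. a \<in> T v} \<le> card V" using False by (simp add: sm_def)
    moreover have "2 * card {v\<in>V. a \<in> T v} \<noteq> card V" using odd by (metis dvd_triv_left)
    ultimately show ?thesis using eq c le by simp
  next
    case f2: False
    then have "{v\<in>V. a \<in> T v} = {}" using sub by auto
    moreover have "card V > 0" using odd by (cases "card V") auto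
    ultimately show ?thesis using eq by (metis Diff_empty mult_2 less_add_same_cancel1)
  qed
qed

lemma two_meet:
  assumes "finite V" "A \<subseteq> V" "B \<subseteq> V" "2 * card A > card V" "2 * card B > card V"
  shows "A \<inter> B \<noteq> {}"
proof
  assume "A \<inter> B = {}"
  then have "card (A \<union> B) = card A + card B"
    using assms by (intro card_Un_disjoint) (auto intro: finite_subset)
  moreover have "card (A \<union> B) \<le> card V" using assms by (intro card_mono) auto
  ultimately show False using assms by simp
qed

lemma helly:
  fixes V :: "nat set" and T :: "nat \<Rightarrow> nat set set"
  assumes fin: "finite V" and odd: "odd (card V)" and sub: "\<forall>v\<in>V. T v \<subseteq> Lambda n"
    and inD: "\<forall>v\<in>V. T v \<in> D"
    and med: "\<forall>T1\<in>D. \<forall>T2\<in>D. \<forall>T3\<in>D. (T1 \<inter> T2) \<union> (T2 \<inter> T3) \<union> (T1 \<inter> T3) \<in> D"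
  shows "finite S \<Longrightarrow> \<exists>Y\<in>D. \<forall>x\<in>S. (x \<in> Y) = (x \<in> sm n V T)"
proof (induction "card S" arbitrary: S rule: less_induct)
  case less
  let ?M = "sm n V T"
  show ?case
  proof (cases "card S \<le> 2")
    case True
    obtain a b where ab: "S \<subseteq> {a, b}"
    proof (cases "card S")
      case 0 then show ?thesis using less.prems that by auto
    next
      case (Suc m)
      then obtain a where "a \<in> S" by (metis card.empty ex_in_conv nat.distinct(1))
      show ?thesis
      proof (cases "S - {a} = {}")
        case True then show ?thesis using that[of a a] by auto
      next
        case False
        then obtain b where b: "b \<in> S - {a}" by auto
        have "S - {a, b} = {}"
        proof (rule ccontr)
          assume "S - {a,b} \<noteq> {}"
          then obtain c where "c \<in> S - {a,b}" by auto
          then have "{a,b,c} \<subseteq> S" using \<open>a \<in> S\<close> b by auto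
          then have "card {a,b,c} \<le> card S" using less.prems by (intro card_mono) auto
          moreover have "a \<noteq> b" "c \<noteq> a" "c \<noteq> b" using b \<open>c \<in> S - {a,b}\<close> by auto
          then have "card {a,b,c} = 3" by simp
          ultimately show False using True by simp
        qed
        then show ?thesis using that[of a b] by auto
      qed
    qed
    have "{v\<in>V. (a \<in> T v) = (a \<in> ?M)} \<inter> {v\<in>V. (b \<in> T v) = (b \<in> ?M)} \<noteq> {}"
      using agree_big[OF fin odd sub, of a] agree_big[OF fin odd sub, of b] fin
      by (intro two_meet[of V]) auto
    then obtain v where v: "v \<in> V" "(a \<in> T v) = (a \<in> ?M)" "(b \<in> T v) = (b \<in> ?M)" by auto
    show ?thesis using v ab inD by (intro bexI[of _ "T v"]) auto
  next
    case False
    obtain a where a: "a \<in> S" using False by (metis card.empty ex_in_conv zero_le)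
    have "card (S - {a}) \<ge> 2" using False a less.prems by auto
    then obtain b where b: "b \<in> S - {a}" by (metis card.empty ex_in_conv not_numeral_le_zero)
    have "card (S - {a} - {b}) \<ge> 1" using False a b less.prems by auto
    then obtain c where c: "c \<in> S - {a} - {b}" by (metis card.empty ex_in_conv not_one_le_zero)
    have lt: "card (S - {x}) < card S" if "x \<in> S" for x
      using that less.prems by (intro card_Diff1_less)
    obtain Ya where Ya: "Ya \<in> D" "\<forall>x\<in>S - {a}. (x \<in> Ya) = (x \<in> ?M)"
      using less.hyps[OF lt[of a]] a less.prems by auto
    obtain Yb where Yb: "Yb \<in> D" "\<forall>x\<in>S - {b}. (x \<in> Yb) = (x \<in> ?M)"
      using less.hyps[OF lt[of b]] b less.prems by auto
    obtain Yc where Yc: "Yc \<in> D" "\<forall>x\<in>S - {c}. (x \<in> Yc) = (x \<in> ?M)"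
      using less.hyps[OF lt[of c]] c less.prems by auto
    have "(Ya \<inter> Yb) \<union> (Yb \<inter> Yc) \<union> (Ya \<inter> Yc) \<in> D" using med Ya Yb Yc by blast
    moreover have "\<forall>x\<in>S. (x \<in> (Ya \<inter> Yb) \<union> (Yb \<inter> Yc) \<union> (Ya \<inter> Yc)) = (x \<in> ?M)"
      using Ya(2) Yb(2) Yc(2) b c by blast
    ultimately show ?thesis by blast
  qed
qed

theorem mainTheorem8:
  fixes n :: nat and D :: "nat set set set"
  assumes "n \<ge> 3"
  shows "closed_condorcet_super_domain n D \<longleftrightarrow> median_super_domain n D"
proof
  assume H: "closed_condorcet_super_domain n D"
  then have til: "\<forall>T\<in>D. is_tiling n T"
    by (simp add: closed_condorcet_super_domain_def condorcet_super_domain_def)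
  have cl: "\<And>V T. finite (V::nat set) \<Longrightarrow> odd (card V) \<Longrightarrow> (\<forall>v\<in>V. T v \<in> D) \<Longrightarrow> sm n V T \<in> D"
    using H by (simp add: closed_condorcet_super_domain_def)
  show "median_super_domain n D"
    unfolding median_super_domain_def
  proof (intro conjI til ballI)
    fix T1 T2 T3 assume t: "T1 \<in> D" "T2 \<in> D" "T3 \<in> D"
    define T where "T = (\<lambda>v::nat. if v = 0 then T1 else if v = 1 then T2 else T3)"
    have sub: "T1 \<subseteq> Lambda n" "T2 \<subseteq> Lambda n" "T3 \<subseteq> Lambda n"
      using til t by (auto simp: is_tiling_def)
    have cnt: "{v\<in>{0,1,2}. t \<in> T v} = (if t \<in> T1 then {0} else {}) \<union> (if t \<in> T2 then {1} else {})
       \<union> (if t \<in> T3 then {2} else {})" for t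
      by (auto simp: T_def)
    have "sm n {0,1,2} T = (T1 \<inter> T2) \<union> (T2 \<inter> T3) \<union> (T1 \<inter> T3)"
      unfolding sm_def cnt using sub
      by (auto split: if_splits)
    moreover have "sm n {0,1,2} T \<in> D" using t by (intro cl) (auto simp: T_def)
    ultimately show "(T1 \<inter> T2) \<union> (T2 \<inter> T3) \<union> (T1 \<inter> T3) \<in> D" by simp
  qed
next
  assume H: "median_super_domain n D"
  then have til: "\<forall>T\<in>D. is_tiling n T" and med: "\<forall>T1\<in>D. \<forall>T2\<in>D. \<forall>T3\<in>D. (T1 \<inter> T2) \<union> (T2 \<inter> T3) \<union> (T1 \<inter> T3) \<in> D"
    by (auto simp: median_super_domain_def)
  have key: "sm n V T \<in> D" if fin: "finite (V::nat set)" and odd: "odd (card V)" and inD: "\<forall>v\<in>V. T v \<in> D" for V T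
  proof -
    have sub: "\<forall>v\<in>V. T v \<subseteq> Lambda n" using inD til by (auto simp: is_tiling_def)
    have finL: "finite (Lambda n)"
      unfolding Lambda_def by (rule finite_subset[of _ "Pow {1..n}"]) auto
    obtain Y where Y: "Y \<in> D" "\<forall>x\<in>Lambda n. (x \<in> Y) = (x \<in> sm n V T)"
      using helly[OF fin odd sub inD med finL] by blast
    have "Y \<subseteq> Lambda n" using Y til by (auto simp: is_tiling_def)
    moreover have "sm n V T \<subseteq> Lambda n" by (auto simp: sm_def)
    ultimately have "Y = sm n V T" using Y(2) by blast
    then show ?thesis using Y by simp
  qed
  show "closed_condorcet_super_domain n D"
    unfolding closed_condorcet_super_domain_def condorcet_super_domain_def
    using key til by blast
qed

end
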